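(* Let $R$ be a finite chain ring and let $C\subseteq R^n$ be a nonzero $R$-linear code of length $n$, rank $K$, locality $r\ge 1$ and minimum distance $d$. Then $$d\le n-K-\left\lceil\frac{K}{r}\right\rceil+2.$$
   Context: A finite chain ring is a finite commutative local ring whose ideals are totally ordered by inclusion. An $R$-linear code is an $R$-submodule $C\subseteq R^n$. The rank of $C$ is the minimum $K$ such that there is an $R$-module monomorphism $C\to R^K$. A coordinate $i$ has locality $r$ if there is $S_i\subseteq\{1,\dots,n\}\setminus\{i\}$ with $|S_i|\le r$ and $|C_{S_i}|=|C_{S_i\cup\{i\}}|$, where $C_S$ is the code punctured to the coordinates in $S$; $C$ has locality $r$ if every coordinate does. $d$ is the minimum Hamming weight of a nonzero codeword. *)

theory Defs
  imports Complex_Main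
begin

definition is_ideal :: "'a::comm_ring_1 set \<Rightarrow> bool" where
  "is_ideal I \<longleftrightarrow> 0 \<in> I \<and> (\<forall>x\<in>I. \<forall>y\<in>I. x + y \<in> I) \<and> (\<forall>x\<in>I. \<forall>a. a * x \<in> I)"

definition maximal_ideal :: "'a::comm_ring_1 set \<Rightarrow> bool" where
  "maximal_ideal I \<longleftrightarrow> is_ideal I \<and> I \<noteq> UNIV \<and>
     (\<forall>J. is_ideal J \<and> I \<subseteq> J \<and> J \<noteq> UNIV \<longrightarrow> J = I)"

definition finite_chain_ring :: "'a::comm_ring_1 itself \<Rightarrow> bool" where
  "finite_chain_ring (_ :: 'a itself) \<longleftrightarrow>
     finite (UNIV :: 'a set) \<and>
     (\<exists>!I :: 'a set. maximal_ideal I) \<and>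
     (\<forall>I J :: 'a set. is_ideal I \<and> is_ideal J \<longrightarrow> I \<subseteq> J \<or> J \<subseteq> I)"

(* R^n: functions nat => R vanishing outside {0..<n} *)
definition vecs :: "nat \<Rightarrow> (nat \<Rightarrow> 'a::zero) set" where
  "vecs n = {x. \<forall>i\<ge>n. x i = 0}"

definition smult_vec :: "'a::times \<Rightarrow> (nat \<Rightarrow> 'a) \<Rightarrow> (nat \<Rightarrow> 'a)" where
  "smult_vec a x = (\<lambda>i. a * x i)"

definition linear_code :: "nat \<Rightarrow> (nat \<Rightarrow> 'a::comm_ring_1) set \<Rightarrow> bool" where
  "linear_code n C \<longleftrightarrow> C \<subseteq> vecs n \<and> (\<lambda>_. 0) \<in> C \<and>
     (\<forall>x\<in>C. \<forall>y\<in>C. (\<lambda>i. x i + y i) \<in> C) \<and> (\<forall>x\<in>C. \<forall>a. smult_vec a x \<in> C)"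

definition module_hom_to :: "(nat \<Rightarrow> 'a::comm_ring_1) set \<Rightarrow> nat \<Rightarrow> ((nat \<Rightarrow> 'a) \<Rightarrow> (nat \<Rightarrow> 'a)) \<Rightarrow> bool" where
  "module_hom_to C K f \<longleftrightarrow> (\<forall>x\<in>C. f x \<in> vecs K) \<and>
     (\<forall>x\<in>C. \<forall>y\<in>C. f (\<lambda>i. x i + y i) = (\<lambda>i. f x i + f y i)) \<and>
     (\<forall>x\<in>C. \<forall>a. f (smult_vec a x) = smult_vec a (f x))"

definition code_rank :: "(nat \<Rightarrow> 'a::comm_ring_1) set \<Rightarrow> nat" where
  "code_rank C = (LEAST K. \<exists>f. module_hom_to C K f \<and> inj_on f C)"

definition puncture :: "(nat \<Rightarrow> 'a) set \<Rightarrow> nat set \<Rightarrow> (nat \<Rightarrow> 'a option) set" where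
  "puncture C S = (\<lambda>c. (\<lambda>i. if i \<in> S then Some (c i) else None)) ` C"

definition has_locality :: "nat \<Rightarrow> (nat \<Rightarrow> 'a) set \<Rightarrow> nat \<Rightarrow> bool" where
  "has_locality n C r \<longleftrightarrow> (\<forall>i<n. \<exists>S. S \<subseteq> {..<n} - {i} \<and> card S \<le> r \<and>
     card (puncture C S) = card (puncture C (insert i S)))"

definition hweight :: "nat \<Rightarrow> (nat \<Rightarrow> 'a::zero) \<Rightarrow> nat" where
  "hweight n c = card {i. i < n \<and> c i \<noteq> 0}"

definition min_dist :: "nat \<Rightarrow> (nat \<Rightarrow> 'a::zero) set \<Rightarrow> nat" where
  "min_dist n C = Min (hweight n ` (C - {\<lambda>_. 0}))"

end

theory Submission
  imports Defs
begin

definition clo :: "nat \<Rightarrow> (nat \<Rightarrow> 'a::zero) set \<Rightarrow> nat set \<Rightarrow> nat set" where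
  "clo n C A = {i. i < n \<and> (\<forall>c\<in>C. (\<forall>a\<in>A. c a = 0) \<longrightarrow> c i = 0)}"

lemma clo_sub: "clo n C A \<subseteq> {..<n}" by (auto simp: clo_def)
lemma clo_fin: "finite (clo n C A)" by (rule finite_subset[OF clo_sub finite_lessThan])
lemma clo_mono: "A \<subseteq> B \<Longrightarrow> clo n C A \<subseteq> clo n C B" by (auto simp: clo_def)
lemma clo_incl: "B \<subseteq> {..<n} \<Longrightarrow> B \<subseteq> clo n C B" by (auto simp: clo_def)
lemma clo_van: "c \<in> C \<Longrightarrow> \<forall>a\<in>A. c a = 0 \<Longrightarrow> i \<in> clo n C A \<Longrightarrow> c i = 0"
  by (auto simp: clo_def)

lemma lc_sub: "linear_code n C \<Longrightarrow> C \<subseteq> vecs n" unfolding linear_code_def by (elim conjE)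
lemma lc_zero: "linear_code n C \<Longrightarrow> (\<lambda>_. 0) \<in> C" unfolding linear_code_def by (elim conjE)
lemma lc_add: "linear_code n C \<Longrightarrow> x \<in> C \<Longrightarrow> y \<in> C \<Longrightarrow> (\<lambda>i. x i + y i) \<in> C"
  unfolding linear_code_def by (elim conjE) blast
lemma lc_smult: "linear_code n C \<Longrightarrow> x \<in> C \<Longrightarrow> smult_vec a x \<in> C"
  unfolding linear_code_def by (elim conjE) blast

lemma code_diff:
  assumes "linear_code n C" "x \<in> C" "y \<in> C"
  shows "(\<lambda>i. x i - y i) \<in> C"
proof -
  have "smult_vec (-1) y \<in> C" using assms lc_smult by blast
  then have "(\<lambda>i. x i + smult_vec (-1) y i) \<in> C" using assms lc_add by blast
  moreover have "(\<lambda>i. x i + smult_vec (-1) y i) = (\<lambda>i. x i - y i)" by (auto simp: smult_vec_def)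
  ultimately show ?thesis by simp
qed

lemma finite_code:
  assumes "finite (UNIV::'a set)" "linear_code n (C :: (nat \<Rightarrow> 'a::comm_ring_1) set)"
  shows "finite C"
proof -
  have inj: "inj_on (\<lambda>c. map c [0..<n]) C"
  proof (rule inj_onI)
    fix x y assume xy: "x \<in> C" "y \<in> C" "map x [0..<n] = map y [0..<n]"
    have "x \<in> vecs n" "y \<in> vecs n" using xy(1,2) lc_sub[OF assms(2)] by blast+
    show "x = y"
    proof
      fix i show "x i = y i"
      proof (cases "i < n")
        case True
        show ?thesis using xy(3) True by simp
      next
        case False then show ?thesis using \<open>x \<in> vecs n\<close> \<open>y \<in> vecs n\<close> by (auto simp: vecs_def)
      qed
    qed
  qed
  have "(\<lambda>c. map c [0..<n]) ` C \<subseteq> {xs. set xs \<subseteq> UNIV \<and> length xs = n}" by auto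
  moreover have "finite {xs. set xs \<subseteq> (UNIV::'a set) \<and> length xs = n}"
    using finite_lists_length_eq[OF assms(1)] by blast
  ultimately have "finite ((\<lambda>c. map c [0..<n]) ` C)" using finite_subset by blast
  then show ?thesis using finite_imageD inj by blast
qed

lemma loc_step:
  assumes lc: "linear_code n C" and fin: "finite C"
    and eq: "card (puncture C S) = card (puncture C (insert i S))"
    and c: "c \<in> C" and van: "\<forall>s\<in>S. c s = 0"
  shows "c i = 0"
proof -
  define g where "g = (\<lambda>(h::nat \<Rightarrow> 'a option) j. if j \<in> S then h j else None)"
  have gp: "g (\<lambda>j. if j \<in> insert i S then Some (x j) else None) = (\<lambda>j. if j \<in> S then Some (x j) else None)" for x
    by (auto simp: g_def)
  have img: "g ` puncture C (insert i S) = puncture C S"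
    unfolding puncture_def image_image gp by simp
  have finp: "finite (puncture C (insert i S))" using fin by (simp add: puncture_def)
  have inj: "inj_on g (puncture C (insert i S))"
    by (simp add: inj_on_iff_eq_card[OF finp] img eq)
  have z: "(\<lambda>_. 0) \<in> C" using lc_zero[OF lc] .
  let ?p = "\<lambda>x. (\<lambda>j. if j \<in> insert i S then Some (x j) else None)"
  have m1: "?p c \<in> puncture C (insert i S)" using c by (auto simp: puncture_def)
  have m2: "?p (\<lambda>_. 0) \<in> puncture C (insert i S)" using z by (auto simp: puncture_def)
  have "g (?p c) = g (?p (\<lambda>_. 0))" unfolding gp using van by auto
  then have "?p c = ?p (\<lambda>_. 0)" using inj m1 m2 by (meson inj_onD)
  then have "?p c i = ?p (\<lambda>_. 0) i" by (rule fun_cong)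
  then show ?thesis by (simp only: if_True insertI1 option.inject)
qed

lemma rank_le:
  assumes lc: "linear_code n (C :: (nat \<Rightarrow> 'a::comm_ring_1) set)" and A: "A \<subseteq> {..<n}"
    and all: "\<forall>i<n. i \<in> clo n C A"
  shows "code_rank C \<le> card A"
proof -
  define e where "e = sorted_list_of_set A"
  have finA: "finite A" using A finite_subset by blast
  have se: "set e = A" "length e = card A" using finA by (auto simp: e_def)
  define f where "f = (\<lambda>(c::nat \<Rightarrow> 'a) k. if k < card A then c (e ! k) else 0)"
  have hom: "module_hom_to C (card A) f"
    unfolding module_hom_to_def by (auto simp: f_def vecs_def smult_vec_def)
  have inj: "inj_on f C"
  proof (rule inj_onI)
    fix x y assume xy: "x \<in> C" "y \<in> C" "f x = f y"
    define d where "d = (\<lambda>i. x i - y i)"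
    have dC: "d \<in> C" using code_diff[OF lc xy(1,2)] by (simp add: d_def)
    have dA: "\<forall>a\<in>A. d a = 0"
    proof
      fix a assume "a \<in> A"
      then obtain k where k: "k < card A" "e ! k = a" using se by (metis in_set_conv_nth)
      have "f x k = f y k" using xy(3) by simp
      then show "d a = 0" using k by (simp add: f_def d_def)
    qed
    have "x \<in> vecs n" "y \<in> vecs n" using xy(1,2) lc_sub[OF lc] by blast+
    show "x = y"
    proof
      fix i show "x i = y i"
      proof (cases "i < n")
        case True
        then have "d i = 0" using clo_van[OF dC dA] all by blast
        then show ?thesis by (simp add: d_def)
      next
        case False then show ?thesis using \<open>x \<in> vecs n\<close> \<open>y \<in> vecs n\<close> by (auto simp: vecs_def)
      qed
    qed
  qed
  show ?thesis unfolding code_rank_def by (rule Least_le) (use hom inj in blast)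
qed

lemma grow:
  assumes lc: "linear_code n C" and fin: "finite C" and loc: "has_locality n C r"
    and rk: "\<And>A. A \<subseteq> {..<n} \<Longrightarrow> card A < K \<Longrightarrow> \<exists>i<n. i \<notin> clo n C A"
  shows "r * j < K \<Longrightarrow> \<exists>A\<subseteq>{..<n}. card A \<le> r * j \<and> card A + j \<le> card (clo n C A)"
proof (induction j)
  case 0 then show ?case by (intro exI[of _ "{}"]) auto
next
  case (Suc j)
  then have "r * j < K" by simp
  then obtain A where A: "A \<subseteq> {..<n}" "card A \<le> r * j" "card A + j \<le> card (clo n C A)"
    using Suc.IH by blast
  obtain i where i: "i < n" "i \<notin> clo n C A" using rk[OF A(1)] A(2) \<open>r * j < K\<close> by fastforce
  obtain S where S: "S \<subseteq> {..<n} - {i}" "card S \<le> r"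
    "card (puncture C S) = card (puncture C (insert i S))"
    using loc i(1) unfolding has_locality_def by blast
  define D where "D = S - clo n C A"
  define A' where "A' = A \<union> D"
  have finS: "finite S" using S(1) finite_subset by blast
  have finD: "finite D" using finS by (simp add: D_def)
  have A'sub: "A' \<subseteq> {..<n}" using A(1) S(1) by (auto simp: A'_def D_def)
  have cA: "card A' \<le> card A + card D" unfolding A'_def by (rule card_Un_le)
  have cD: "card D \<le> r" using S(2) card_mono[OF finS, of D] by (auto simp: D_def)
  have sub1: "clo n C A \<subseteq> clo n C A'" by (rule clo_mono) (auto simp: A'_def)
  have sub2: "D \<subseteq> clo n C A'" using clo_incl[OF A'sub] by (auto simp: A'_def)
  have Ssub: "S \<subseteq> clo n C A'" using sub1 sub2 by (auto simp: D_def)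
  have iin: "i \<in> clo n C A'"
  proof -
    have "c i = 0" if c: "c \<in> C" "\<forall>a\<in>A'. c a = 0" for c
      using loc_step[OF lc fin S(3) c(1)] clo_van[OF c] Ssub by blast
    then show ?thesis using i(1) by (auto simp: clo_def)
  qed
  have iD: "i \<notin> D" using S(1) by (auto simp: D_def)
  have dis: "clo n C A \<inter> D = {}" by (auto simp: D_def)
  have "insert i (clo n C A \<union> D) \<subseteq> clo n C A'" using sub1 sub2 iin by auto
  then have "card (insert i (clo n C A \<union> D)) \<le> card (clo n C A')"
    by (rule card_mono[OF clo_fin])
  moreover have "card (insert i (clo n C A \<union> D)) = card (clo n C A) + card D + 1"
    using i(2) iD dis clo_fin[of n C A] finD by (simp add: card_Un_disjoint)
  ultimately have "card (clo n C A) + card D + 1 \<le> card (clo n C A')" by simp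
  moreover have "card A' \<le> r * Suc j" using A(2) cA cD by simp
  moreover have "card A' + Suc j \<le> card (clo n C A')" using A(3) cA \<open>card (clo n C A) + card D + 1 \<le> card (clo n C A')\<close> by linarith
  ultimately show ?case using A'sub by blast
qed

lemma pad:
  assumes rk: "\<And>A. A \<subseteq> {..<n} \<Longrightarrow> card A < K \<Longrightarrow> \<exists>i<n. i \<notin> clo n C A"
  shows "A \<subseteq> {..<n} \<Longrightarrow> card A \<le> m \<Longrightarrow> m < K \<Longrightarrow> card A + j \<le> card (clo n C A)
     \<Longrightarrow> \<exists>A'\<subseteq>{..<n}. card A' = m \<and> m + j \<le> card (clo n C A')"
proof (induction "m - card A" arbitrary: A)
  case 0 then show ?case by (intro exI[of _ A]) auto
next
  case (Suc x)
  obtain i where i: "i < n" "i \<notin> clo n C A" using rk[OF Suc.prems(1)] Suc.prems(2,3) by fastforce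
  have finA: "finite A" using Suc.prems(1) finite_subset by blast
  have iA: "i \<notin> A" using i clo_incl[OF Suc.prems(1)] by blast
  have c1: "card (insert i A) = card A + 1" using finA iA by simp
  have "insert i (clo n C A) \<subseteq> clo n C (insert i A)"
    using clo_mono[of A "insert i A"] clo_incl[of "insert i A" n C] i(1) Suc.prems(1) by auto
  then have "card (insert i (clo n C A)) \<le> card (clo n C (insert i A))" by (rule card_mono[OF clo_fin])
  then have c2: "card (clo n C A) + 1 \<le> card (clo n C (insert i A))" using i(2) clo_fin[of n C A] by simp
  have p1: "x = m - card (insert i A)" using Suc.hyps(2) c1 by simp
  have p2: "insert i A \<subseteq> {..<n}" using Suc.prems(1) i(1) by simp
  have p3: "card (insert i A) \<le> m" using Suc.hyps(2) c1 by simp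
  have p4: "card (insert i A) + j \<le> card (clo n C (insert i A))" using Suc.prems(4) c1 c2 by simp
  show ?case by (rule Suc.hyps(1)[OF p1 p2 p3 Suc.prems(3) p4])
qed

theorem mainTheorem3:
  fixes C :: "(nat \<Rightarrow> 'a::comm_ring_1) set" and n r :: nat
  assumes "finite_chain_ring TYPE('a)"
    and "linear_code n C"
    and "C \<noteq> {\<lambda>_. 0}"
    and "r \<ge> 1"
    and "has_locality n C r"
  shows "int (min_dist n C) \<le> int n - int (code_rank C) - \<lceil>real (code_rank C) / real r\<rceil> + 2"
proof -
  note lc = assms(2)
  have fU: "finite (UNIV::'a set)" using assms(1) unfolding finite_chain_ring_def by (elim conjE)
  have fin: "finite C" by (rule finite_code[OF fU lc])
  have z: "(\<lambda>_. 0) \<in> C" using lc_zero[OF lc] .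
  define K where "K = code_rank C"
  have rk: "\<exists>i<n. i \<notin> clo n C A" if "A \<subseteq> {..<n}" "card A < K" for A
  proof (rule ccontr)
    assume "\<not> ?thesis"
    then have "\<forall>i<n. i \<in> clo n C A" by blast
    then have "K \<le> card A" using rank_le[OF lc that(1)] unfolding K_def by blast
    then show False using that(2) by simp
  qed
  have finH: "finite (hweight n ` (C - {\<lambda>_. 0}))" using fin by simp
  have wt: "hweight n c \<le> n - card T" if "c \<in> C" "T \<subseteq> {..<n}" "\<forall>t\<in>T. c t = 0" for c T
  proof -
    have "{i. i < n \<and> c i \<noteq> 0} \<subseteq> {..<n} - T" using that by auto
    then have "hweight n c \<le> card ({..<n} - T)" unfolding hweight_def by (intro card_mono) auto
    also have "\<dots> = n - card T" using that(2) by (simp add: card_Diff_subset finite_subset)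
    finally show ?thesis .
  qed
  have md: "min_dist n C \<le> hweight n c" if "c \<in> C" "c \<noteq> (\<lambda>_. 0)" for c
  proof -
    have "hweight n c \<in> hweight n ` (C - {\<lambda>_. 0})" using that by blast
    then show ?thesis unfolding min_dist_def by (rule Min_le[OF finH])
  qed
  show ?thesis
  proof (cases "K = 0")
    case True
    obtain c where c: "c \<in> C" "c \<noteq> (\<lambda>_. 0)" using assms(3) z by blast
    have "hweight n c \<le> n - card ({}::nat set)" by (rule wt[OF c(1)]) auto
    then have "min_dist n C \<le> n" using md[OF c] by simp
    then show ?thesis using True by (simp add: K_def[symmetric])
  next
    case False
    define m where "m = \<lceil>real K / real r\<rceil>"
    have rpos: "real r > 0" using assms(4) by simp
    have q: "real K / real r > 0" using False rpos by simp
    have "real K / real r \<le> of_int m" unfolding m_def by (rule le_of_int_ceiling)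
    then have m1: "m \<ge> 1" using q by linarith
    define j where "j = nat (m - 1)"
    have "\<not> (real K / real r \<le> of_int (m - 1))" unfolding m_def
      using ceiling_correct[of "real K / real r"] by simp
    then have "real K / real r > of_int (m - 1)" by simp
    then have "real K > of_int (m - 1) * real r" using rpos by (simp add: field_simps)
    moreover have "of_int (m - 1) = real j" using m1 unfolding j_def by simp
    ultimately have "real (r * j) < real K" by (simp add: mult.commute)
    then have rj: "r * j < K" by (simp only: of_nat_less_iff)
    obtain A where A: "A \<subseteq> {..<n}" "card A \<le> r * j" "card A + j \<le> card (clo n C A)"
      using grow[OF lc fin assms(5) rk rj] by blast
    have a2: "card A \<le> K - 1" using A(2) rj by simp
    have a3: "K - 1 < K" using False by simp
    obtain A' where A': "A' \<subseteq> {..<n}" "card A' = K - 1" "K - 1 + j \<le> card (clo n C A')"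
      using pad[OF rk A(1) a2 a3 A(3)] by blast
    have "card A' < K" using A'(2) False by simp
    then obtain i where i: "i < n" "i \<notin> clo n C A'" using rk[OF A'(1)] by blast
    then obtain c where c: "c \<in> C" "\<forall>a\<in>A'. c a = 0" "c i \<noteq> 0" by (auto simp: clo_def)
    have cnz: "c \<noteq> (\<lambda>_. 0)" using c(3) by auto
    have cv: "\<forall>t\<in>clo n C A'. c t = 0" using clo_van[OF c(1,2)] by blast
    have "min_dist n C \<le> n - card (clo n C A')"
      using md[OF c(1) cnz] wt[OF c(1) clo_sub cv] by linarith
    moreover have "card (clo n C A') \<le> n" using card_mono[OF finite_lessThan[of n] clo_sub[of n C A']] by simp
    ultimately have "int (min_dist n C) \<le> int n - int (K - 1 + j)" using A'(3) by linarith
    moreover have "int j = m - 1" using m1 unfolding j_def by simp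
    ultimately show ?thesis using False unfolding m_def K_def by linarith
  qed
qed

end
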